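(* Let $\mathcal{A}$ be a finite set, $u,v\in\Delta(\mathcal{A})$ probability vectors, and $r:\mathcal{A}\to\mathbb{R}$ a reward function. Consider a preference model $\mathbb{P}_r(y=1|a,a')\in[0,1]$ satisfying $\mathbb{P}_r(y=1|a,a')\ge\frac12$ for all $a,a'\in\mathcal{A}$ with $r(a)\ge r(a')$. Then $$\sum_{a\in\mathcal{A}}\sqrt{u(a)v(a)}\le\min_{\gamma>0}\sqrt{\big(\gamma+2\mathbb{P}_r(v\succ u)\big)\log\frac{1+\gamma}{\gamma}},$$ where $\mathbb{P}_r(v\succ u):=\mathbb{E}_{a\sim v,a'\sim u}[\mathbb{P}_r(y=1|a,a')]$. *)

theory Defs
  imports Complex_Main
begin

definition prob_vec :: "'a set \<Rightarrow> ('a \<Rightarrow> real) \<Rightarrow> bool" where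
  "prob_vec A u \<longleftrightarrow> (\<forall>a\<in>A. 0 \<le> u a) \<and> (\<Sum>a\<in>A. u a) = 1"

definition pref_prob :: "'a set \<Rightarrow> ('a \<Rightarrow> 'a \<Rightarrow> real) \<Rightarrow> ('a \<Rightarrow> real) \<Rightarrow> ('a \<Rightarrow> real) \<Rightarrow> real" where
  "pref_prob A P v u = (\<Sum>a\<in>A. \<Sum>a'\<in>A. v a * u a' * P a a')"

end

theory Submission
  imports Defs "HOL-Analysis.Convex"
begin

lemma lnd: "0 < (x::real) \<Longrightarrow> 0 < y \<Longrightarrow> ln (x / y) = ln x - ln y"
  by (simp add: ln_div)

lemma harm_ln:
  fixes v r :: "'a \<Rightarrow> real"
  assumes "finite B" "\<forall>a\<in>B. 0 \<le> v a" "\<gamma> > 0"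
  shows "(\<Sum>a\<in>B. v a / (\<gamma> + (\<Sum>b\<in>{b\<in>B. r a \<le> r b}. v b))) \<le> ln ((\<gamma> + sum v B) / \<gamma>)"
  using assms(1,2)
proof (induction B rule: finite_remove_induct)
  case empty
  then show ?case using assms(3) by simp
next
  case (remove A)
  obtain m where m: "m \<in> A" "r m = Min (r ` A)"
  proof -
    have "Min (r ` A) \<in> r ` A" using remove(1,2) by (intro Min_in) auto
    then show ?thesis using that by auto
  qed
  have mmin: "\<forall>a\<in>A. r m \<le> r a" using m remove(1) by simp
  define A' where "A' = A - {m}"
  have nn: "\<forall>a\<in>A. 0 \<le> v a" using remove by auto
  have IH: "(\<Sum>a\<in>A'. v a / (\<gamma> + (\<Sum>b\<in>{b\<in>A'. r a \<le> r b}. v b))) \<le> ln ((\<gamma> + sum v A') / \<gamma>)"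
    using remove(4)[OF m(1)] nn unfolding A'_def by auto
  have fA': "finite A'" using remove(1) A'_def by auto
  have T: "sum v A = v m + sum v A'" unfolding A'_def using remove(1) m(1) by (simp add: sum.remove)
  have T'nn: "sum v A' \<ge> 0" using nn A'_def by (auto intro: sum_nonneg)
  have Vm: "{b\<in>A. r m \<le> r b} = A" using mmin by auto
  have step: "v a / (\<gamma> + (\<Sum>b\<in>{b\<in>A. r a \<le> r b}. v b)) \<le> v a / (\<gamma> + (\<Sum>b\<in>{b\<in>A'. r a \<le> r b}. v b))"
    if "a \<in> A'" for a
  proof -
    have s1: "(\<Sum>b\<in>{b\<in>A'. r a \<le> r b}. v b) \<le> (\<Sum>b\<in>{b\<in>A. r a \<le> r b}. v b)"
      by (rule sum_mono2) (use remove(1) nn A'_def in auto)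
    have s2: "(\<Sum>b\<in>{b\<in>A'. r a \<le> r b}. v b) \<ge> 0"
      using nn A'_def by (auto intro: sum_nonneg)
    have "v a \<ge> 0" using nn that A'_def by auto
    then show ?thesis
      by (rule frac_le) (use s1 s2 assms(3) in auto)
  qed
  have sumA: "(\<Sum>a\<in>A. v a / (\<gamma> + (\<Sum>b\<in>{b\<in>A. r a \<le> r b}. v b)))
      = v m / (\<gamma> + sum v A) + (\<Sum>a\<in>A'. v a / (\<gamma> + (\<Sum>b\<in>{b\<in>A. r a \<le> r b}. v b)))"
    unfolding A'_def using remove(1) m(1) Vm by (simp add: sum.remove)
  have p1: "0 < \<gamma> + sum v A'" using T'nn assms(3) by linarith
  have p2: "0 < \<gamma> + sum v A" using T T'nn nn m(1) assms(3) by force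
  have lnle: "ln ((\<gamma> + sum v A') / (\<gamma> + sum v A)) \<le> (\<gamma> + sum v A') / (\<gamma> + sum v A) - 1"
    by (rule ln_le_minus_one) (use p1 p2 in simp)
  have eq1: "(\<gamma> + sum v A') / (\<gamma> + sum v A) - 1 = - (v m / (\<gamma> + sum v A))"
    using p2 T by (simp add: field_simps)
  have lm: "v m / (\<gamma> + sum v A) \<le> ln (\<gamma> + sum v A) - ln (\<gamma> + sum v A')"
    using lnle eq1 lnd[OF p1 p2] by linarith
  have "(\<Sum>a\<in>A'. v a / (\<gamma> + (\<Sum>b\<in>{b\<in>A. r a \<le> r b}. v b))) \<le> ln ((\<gamma> + sum v A') / \<gamma>)"
    using IH sum_mono[of A' _ "\<lambda>a. v a / (\<gamma> + (\<Sum>b\<in>{b\<in>A'. r a \<le> r b}. v b))", OF step] by linarith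
  then show ?case using sumA lm lnd[OF p1 assms(3)] lnd[OF p2 assms(3)] by linarith
qed

theorem lemmaG1:
  fixes A :: "'a set" and u v :: "'a \<Rightarrow> real" and r :: "'a \<Rightarrow> real"
    and P :: "'a \<Rightarrow> 'a \<Rightarrow> real"
  assumes "finite A"
    and "prob_vec A u" and "prob_vec A v"
    and "\<And>a a'. a \<in> A \<Longrightarrow> a' \<in> A \<Longrightarrow> 0 \<le> P a a' \<and> P a a' \<le> 1"
    and "\<And>a a'. a \<in> A \<Longrightarrow> a' \<in> A \<Longrightarrow> r a \<ge> r a' \<Longrightarrow> P a a' \<ge> 1/2"
  shows "(\<Sum>a\<in>A. sqrt (u a * v a))
           \<le> (INF \<gamma>\<in>{0<..}. sqrt ((\<gamma> + 2 * pref_prob A P v u) * ln ((1 + \<gamma>) / \<gamma>)))"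
proof (rule cINF_greatest)
  show "{0<..} \<noteq> ({}::real set)" by auto
next
  fix \<gamma> :: real assume "\<gamma> \<in> {0<..}"
  then have g: "\<gamma> > 0" by simp
  have un: "\<forall>a\<in>A. 0 \<le> u a" "sum u A = 1" using assms(2) unfolding prob_vec_def by auto
  have vn: "\<forall>a\<in>A. 0 \<le> v a" "sum v A = 1" using assms(3) unfolding prob_vec_def by auto
  define V where "V a = (\<Sum>b\<in>{b\<in>A. r a \<le> r b}. v b)" for a
  have Vnn: "V a \<ge> 0" if "a \<in> A" for a unfolding V_def using vn by (auto intro: sum_nonneg)
  have pos: "\<gamma> + V a > 0" if "a \<in> A" for a using Vnn[OF that] g by linarith
  have split: "sqrt (u a * v a) = sqrt (u a * (\<gamma> + V a)) * sqrt (v a / (\<gamma> + V a))" if "a \<in> A" for a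
  proof -
    have "u a * v a = (u a * (\<gamma> + V a)) * (v a / (\<gamma> + V a))" using pos[OF that] by (simp add: field_simps)
    then show ?thesis by (simp add: real_sqrt_mult[symmetric])
  qed
  have CS: "(\<Sum>a\<in>A. sqrt (u a * v a))\<^sup>2 \<le> (\<Sum>a\<in>A. (sqrt (u a * (\<gamma> + V a)))\<^sup>2) * (\<Sum>a\<in>A. (sqrt (v a / (\<gamma> + V a)))\<^sup>2)"
    using Cauchy_Schwarz_ineq_sum[of "\<lambda>a. sqrt (u a * (\<gamma> + V a))" "\<lambda>a. sqrt (v a / (\<gamma> + V a))" A]
    by (simp add: split cong: sum.cong)
  have f1: "(\<Sum>a\<in>A. (sqrt (u a * (\<gamma> + V a)))\<^sup>2) = (\<Sum>a\<in>A. u a * (\<gamma> + V a))"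
  proof (intro sum.cong refl)
    fix a assume "a \<in> A"
    then have "u a \<ge> 0" "\<gamma> + V a > 0" using un pos by auto
    then show "(sqrt (u a * (\<gamma> + V a)))\<^sup>2 = u a * (\<gamma> + V a)" by simp
  qed
  have f2: "(\<Sum>a\<in>A. (sqrt (v a / (\<gamma> + V a)))\<^sup>2) = (\<Sum>a\<in>A. v a / (\<gamma> + V a))"
  proof (intro sum.cong refl)
    fix a assume "a \<in> A"
    then have "v a \<ge> 0" "\<gamma> + V a > 0" using vn pos by auto
    then show "(sqrt (v a / (\<gamma> + V a)))\<^sup>2 = v a / (\<gamma> + V a)" by simp
  qed
  have H: "(\<Sum>a\<in>A. v a / (\<gamma> + V a)) \<le> ln ((1 + \<gamma>) / \<gamma>)"
    using harm_ln[OF assms(1) vn(1) g, of r] vn(2) unfolding V_def by (simp add: add.commute)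
  have Hnn: "(\<Sum>a\<in>A. v a / (\<gamma> + V a)) \<ge> 0"
    using vn pos by (intro sum_nonneg) (auto intro: divide_nonneg_pos)
  have termle: "u a * (if r a \<le> r b then v b else 0) \<le> 2 * (v b * u a * P b a)" if "a \<in> A" "b \<in> A" for a b
  proof (cases "r a \<le> r b")
    case True
    then have "P b a \<ge> 1/2" using assms(5) that by auto
    moreover have "v b * u a \<ge> 0" using un vn that by auto
    ultimately have "v b * u a * (1/2) \<le> v b * u a * P b a" by (intro mult_left_mono) auto
    then show ?thesis using True by (simp add: algebra_simps)
  next
    case False
    have "v b * u a * P b a \<ge> 0" using un vn assms(4) that by auto
    then show ?thesis using False by simp
  qed
  have "(\<Sum>a\<in>A. u a * V a) = (\<Sum>a\<in>A. \<Sum>b\<in>A. u a * (if r a \<le> r b then v b else 0))"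
    unfolding V_def by (simp add: sum_distrib_left sum.inter_filter[OF assms(1)] if_distrib cong: if_cong)
  also have "\<dots> \<le> (\<Sum>a\<in>A. \<Sum>b\<in>A. 2 * (v b * u a * P b a))"
    by (intro sum_mono termle)
  also have "\<dots> = 2 * pref_prob A P v u"
    unfolding pref_prob_def by (subst sum.swap) (simp add: sum_distrib_left)
  finally have uV: "(\<Sum>a\<in>A. u a * V a) \<le> 2 * pref_prob A P v u" .
  have F1: "(\<Sum>a\<in>A. u a * (\<gamma> + V a)) \<le> \<gamma> + 2 * pref_prob A P v u"
  proof -
    have "(\<Sum>a\<in>A. u a * (\<gamma> + V a)) = \<gamma> * sum u A + (\<Sum>a\<in>A. u a * V a)"
      by (simp add: algebra_simps sum.distrib sum_distrib_left)
    then show ?thesis using uV un(2) by simp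
  qed
  have F1nn: "(\<Sum>a\<in>A. u a * (\<gamma> + V a)) \<ge> 0"
  proof (intro sum_nonneg)
    fix a assume "a \<in> A"
    then have "u a \<ge> 0" "\<gamma> + V a > 0" using un pos by auto
    then show "u a * (\<gamma> + V a) \<ge> 0" by simp
  qed
  have "(\<Sum>a\<in>A. sqrt (u a * v a))\<^sup>2 \<le> (\<gamma> + 2 * pref_prob A P v u) * ln ((1 + \<gamma>) / \<gamma>)"
    using order_trans[OF CS[unfolded f1 f2] mult_mono[OF F1 H order_trans[OF F1nn F1] Hnn]] .
  moreover have "(\<Sum>a\<in>A. sqrt (u a * v a)) \<ge> 0" by (intro sum_nonneg) (simp add: un vn)
  ultimately show "(\<Sum>a\<in>A. sqrt (u a * v a)) \<le> sqrt ((\<gamma> + 2 * pref_prob A P v u) * ln ((1 + \<gamma>) / \<gamma>))"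
    using real_le_rsqrt by blast
qed

end
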